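(* Suppose $\Xi=\{\boldsymbol{\xi}\in\mathbb{R}^m:(\boldsymbol{\xi}-\boldsymbol{\xi}_0)^{\top}\boldsymbol{W}^{-1}(\boldsymbol{\xi}-\boldsymbol{\xi}_0)\le1\}$ with $\boldsymbol{W}\succ0$, and $f_t(\boldsymbol{x},\boldsymbol{\xi})=\boldsymbol{w}_t(\boldsymbol{\xi})^{\top}\boldsymbol{x}$ for all $t\in[T]$, where each component is $w_{tj}(\boldsymbol{\xi})=\boldsymbol{\xi}^{\top}\boldsymbol{W}_{tj}\boldsymbol{\xi}+\boldsymbol{r}_{tj}^{\top}\boldsymbol{\xi}+h_{tj}$ with $\boldsymbol{W}_{tj}\succeq0$, $j\in[n]$. Set $\boldsymbol{W}_t(\boldsymbol{x})=\sum_{j=1}^nx_j\boldsymbol{W}_{tj}$, $\boldsymbol{R}_t(\boldsymbol{x})=\sum_{j=1}^nx_j\boldsymbol{r}_{tj}$, $H_t(\boldsymbol{x})=\sum_{j=1}^nx_jh_{tj}$. Let $\tilde Z_{C_2}$ be the set of $\boldsymbol{x}\in\mathbb{R}^n$ for which there exist $\alpha_t>0$, $q_{it}\ge0$, $\boldsymbol{v}_{it}\in\mathbb{R}^m$ ($i\in[N],t\in[T]$) with, for all $i,t$, $\|\boldsymbol{v}_{it}\|_*\delta+\frac1N\sum_{j=1}^Nq_{jt}\le\epsilon\alpha_t$ and $\sup_{\boldsymbol{\xi}\in\Xi}[\boldsymbol{v}_{it}^{\top}\boldsymbol{\xi}-f_t(\boldsymbol{x},\boldsymbol{\xi})]+\alpha_t-\boldsymbol{v}_{it}^{\top}\boldsymbol{\zeta}^i-q_{it}\le0$.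 Then $\tilde Z_{C_2}$ equals the set of $\boldsymbol{x}\in\mathbb{R}^n$ for which there exist $\alpha_t>0$, $q_{it}\ge0$, $\boldsymbol{v}_{it}\in\mathbb{R}^m$, $u_{it}\in\mathbb{R}$, $\nu_{it}\ge0$ such that for all $i\in[N],t\in[T]$: $$\|\boldsymbol{v}_{it}\|_*\delta+\frac1N\sum_{j=1}^Nq_{jt}\le\epsilon\alpha_t,\qquad u_{it}-H_t(\boldsymbol{x})+\alpha_t-\boldsymbol{v}_{it}^{\top}\boldsymbol{\zeta}^i\le q_{it},$$ $$\begin{bmatrix}\boldsymbol{W}_t(\boldsymbol{x})+\nu_{it}\boldsymbol{W}^{-1}&-\frac12(2\nu_{it}\boldsymbol{W}^{-1}\boldsymbol{\xi}_0+\boldsymbol{v}_{it}-\boldsymbol{R}_t(\boldsymbol{x}))\\-\frac12(2\nu_{it}\boldsymbol{W}^{-1}\boldsymbol{\xi}_0+\boldsymbol{v}_{it}-\boldsymbol{R}_t(\boldsymbol{x}))^{\top}&u_{it}+\nu_{it}\boldsymbol{\xi}_0^{\top}\boldsymbol{W}^{-1}\boldsymbol{\xi}_0-\nu_{it}\end{bmatrix}\succeq0.$$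
   Context: Setting: $\epsilon\in(0,1)$, $\delta>0$, $[T]=\{1,\dots,T\}$; $\boldsymbol{\zeta}^1,\dots,\boldsymbol{\zeta}^N\in\Xi$ given samples; $\|\cdot\|_*$ is the dual norm of a norm on $\mathbb{R}^m$; $\succeq0$ ($\succ0$) denotes positive semidefinite (definite). *)

theory Defs
  imports "HOL-Analysis.Analysis"
begin

definition psd :: "real^'k^'k \<Rightarrow> bool" where
  "psd A \<longleftrightarrow> transpose A = A \<and> (\<forall>y. 0 \<le> y \<bullet> (A *v y))"

definition pd :: "real^'k^'k \<Rightarrow> bool" where
  "pd A \<longleftrightarrow> transpose A = A \<and> (\<forall>y. y \<noteq> 0 \<longrightarrow> 0 < y \<bullet> (A *v y))"

text \<open>The (m+1)x(m+1) block matrix [A b; b^T c], indexed by 'm + unit.\<close>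
definition block_mat :: "real^'m^'m \<Rightarrow> real^'m \<Rightarrow> real \<Rightarrow> real^('m + unit)^('m + unit)" where
  "block_mat A b c = (\<chi> i j. (case i of
       Inl k \<Rightarrow> (case j of Inl l \<Rightarrow> A $ k $ l | Inr _ \<Rightarrow> b $ k)
     | Inr _ \<Rightarrow> (case j of Inl l \<Rightarrow> b $ l | Inr _ \<Rightarrow> c)))"

definition is_norm :: "(real^'m \<Rightarrow> real) \<Rightarrow> bool" where
  "is_norm nrm \<longleftrightarrow> (\<forall>x. nrm x = 0 \<longleftrightarrow> x = 0)
      \<and> (\<forall>c x. nrm (c *\<^sub>R x) = \<bar>c\<bar> * nrm x)
      \<and> (\<forall>x y. nrm (x + y) \<le> nrm x + nrm y)"

definition dual_norm :: "(real^'m \<Rightarrow> real) \<Rightarrow> real^'m \<Rightarrow> real" where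
  "dual_norm nrm v = Sup {v \<bullet> z | z. nrm z \<le> 1}"

definition ellipsoid :: "real^'m \<Rightarrow> real^'m^'m \<Rightarrow> (real^'m) set" where
  "ellipsoid xi0 W = {xi. (xi - xi0) \<bullet> (matrix_inv W *v (xi - xi0)) \<le> 1}"

definition wcomp :: "real^'m^'m \<Rightarrow> real^'m \<Rightarrow> real \<Rightarrow> real^'m \<Rightarrow> real" where
  "wcomp Wj rj hj xi = xi \<bullet> (Wj *v xi) + rj \<bullet> xi + hj"

definition fobj :: "(nat \<Rightarrow> 'n \<Rightarrow> real^'m^'m) \<Rightarrow> (nat \<Rightarrow> 'n \<Rightarrow> real^'m) \<Rightarrow> (nat \<Rightarrow> 'n \<Rightarrow> real)
    \<Rightarrow> nat \<Rightarrow> real^'n::finite \<Rightarrow> real^'m \<Rightarrow> real" where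
  "fobj Wc r h t x xi = (\<Sum>j\<in>UNIV. wcomp (Wc t j) (r t j) (h t j) xi * x $ j)"

definition Wt :: "(nat \<Rightarrow> 'n \<Rightarrow> real^'m^'m) \<Rightarrow> nat \<Rightarrow> real^'n::finite \<Rightarrow> real^'m^'m" where
  "Wt Wc t x = (\<Sum>j\<in>UNIV. x $ j *\<^sub>R Wc t j)"

definition Rt :: "(nat \<Rightarrow> 'n \<Rightarrow> real^'m) \<Rightarrow> nat \<Rightarrow> real^'n::finite \<Rightarrow> real^'m" where
  "Rt r t x = (\<Sum>j\<in>UNIV. x $ j *\<^sub>R r t j)"

definition Ht :: "(nat \<Rightarrow> 'n \<Rightarrow> real) \<Rightarrow> nat \<Rightarrow> real^'n::finite \<Rightarrow> real" where
  "Ht h t x = (\<Sum>j\<in>UNIV. x $ j * h t j)"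

end

theory Submission
  imports Defs
begin

lemma sym_dot:
  fixes M :: "real^'m^'m"
  assumes "transpose M = M"
  shows "x \<bullet> (M *v y) = y \<bullet> (M *v x)"
proof -
  have "x \<bullet> (M *v y) = (x v* M) \<bullet> y" by (simp add: dot_lmul_matrix)
  also have "x v* M = transpose M *v x" by simp
  finally show ?thesis using assms by (simp add: inner_commute)
qed

lemma quad_expand:
  fixes M :: "real^'m^'m"
  assumes "transpose M = M"
  shows "(x + t *\<^sub>R d) \<bullet> (M *v (x + t *\<^sub>R d))
     = x \<bullet> (M *v x) + 2 * t * (d \<bullet> (M *v x)) + t\<^sup>2 * (d \<bullet> (M *v d))"
  using sym_dot[OF assms, of x d]
  by (simp add: matrix_vector_right_distrib matrix_vector_mult_scaleR inner_add_left inner_add_right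
      power2_eq_square algebra_simps)

lemma transpose_add: "transpose (A + B) = transpose A + transpose (B::real^'m^'m)"
  by (simp add: transpose_def vec_eq_iff)

lemma transpose_scaleR': "transpose (c *\<^sub>R A) = c *\<^sub>R transpose (A::real^'m^'m)"
  by (simp add: transpose_def vec_eq_iff)

lemma dir_lemma:
  fixes a b :: real
  assumes "eventually (\<lambda>t. 0 \<le> a * t + b * t\<^sup>2) (at_right 0)"
  shows "0 \<le> a"
proof -
  have ev: "eventually (\<lambda>t. 0 \<le> a + b * t) (at_right (0::real))"
    using assms eventually_at_right_less[of 0]
  proof (rule eventually_elim2)
    fix t :: real assume h: "0 \<le> a * t + b * t\<^sup>2" "0 < t"
    have "a * t + b * t\<^sup>2 = t * (a + b * t)" by (simp add: power2_eq_square algebra_simps)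
    then show "0 \<le> a + b * t" using h by (simp add: zero_le_mult_iff)
  qed
  have "((\<lambda>t. a + b * t) \<longlongrightarrow> a + b * 0) (at_right (0::real))"
    by (intro tendsto_intros)
  then show ?thesis using ev by (intro tendsto_lowerbound) auto
qed

lemma pd_coercive:
  fixes P :: "real^'m^'m"
  assumes "pd P"
  shows "\<exists>l>0. \<forall>y. l * (norm y)\<^sup>2 \<le> y \<bullet> (P *v y)"
proof -
  have cont: "continuous_on (sphere 0 1) (\<lambda>y::real^'m. y \<bullet> (P *v y))"
    by (intro continuous_intros continuous_on_id matrix_vector_mult_linear_continuous_on)
  obtain y0 where y0: "y0 \<in> sphere 0 1" "\<forall>y\<in>sphere 0 1. y0 \<bullet> (P *v y0) \<le> y \<bullet> (P *v y)"
    proof -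
    have "sphere (0::real^'m) 1 \<noteq> {}" by (simp add: sphere_eq_empty)
    then show ?thesis using continuous_attains_inf[OF compact_sphere _ cont] that by blast
  qed
  have pos: "0 < y0 \<bullet> (P *v y0)" proof -
    have "y0 \<noteq> 0" using y0(1) by auto
    then show ?thesis using assms unfolding pd_def by blast
  qed
  show ?thesis
  proof (intro exI[of _ "y0 \<bullet> (P *v y0)"] conjI allI pos)
    fix y :: "real^'m"
    show "y0 \<bullet> (P *v y0) * (norm y)\<^sup>2 \<le> y \<bullet> (P *v y)"
    proof (cases "y = 0")
      case True then show ?thesis by simp
    next
      case False
      define z where "z = (1 / norm y) *\<^sub>R y"
      have "z \<in> sphere 0 1" using False by (simp add: z_def)
      then have "y0 \<bullet> (P *v y0) \<le> z \<bullet> (P *v z)" using y0 by auto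
      also have "z \<bullet> (P *v z) = (y \<bullet> (P *v y)) / (norm y)\<^sup>2"
        by (simp add: z_def matrix_vector_mult_scaleR power2_eq_square)
      finally show ?thesis using False by (simp add: field_simps)
    qed
  qed
qed

lemma Mexp: "d \<bullet> ((A + \<nu> *\<^sub>R P) *v d) = d \<bullet> (A *v d) + \<nu> * (d \<bullet> (P *v (d::real^'m)))"
  by (simp add: matrix_vector_mult_add_rdistrib inner_add_right flip: scaleR_matrix_vector_assoc)

lemma psd_from_nonorth:
  fixes M :: "real^'m^'m"
  assumes symM: "transpose M = M" and p: "p \<noteq> 0"
    and h: "\<And>d. p \<bullet> d \<noteq> 0 \<Longrightarrow> 0 \<le> d \<bullet> (M *v d)"
  shows "0 \<le> d \<bullet> (M *v d)"
proof (cases "p \<bullet> d = 0")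
  case False then show ?thesis by (rule h)
next
  case True
  have pp: "0 < p \<bullet> p" using p by simp
  have ev: "eventually (\<lambda>e. 0 \<le> d \<bullet> (M *v d) + 2 * e * (p \<bullet> (M *v d)) + e\<^sup>2 * (p \<bullet> (M *v p))) (at_right (0::real))"
    using eventually_at_right_less[of 0]
  proof (rule eventually_mono)
    fix e :: real assume "0 < e"
    then have "p \<bullet> (d + e *\<^sub>R p) \<noteq> 0" using pp True by (simp add: inner_add_right)
    from h[OF this] show "0 \<le> d \<bullet> (M *v d) + 2 * e * (p \<bullet> (M *v d)) + e\<^sup>2 * (p \<bullet> (M *v p))"
      by (simp add: quad_expand[OF symM])
  qed
  have "((\<lambda>e. d \<bullet> (M *v d) + 2 * e * (p \<bullet> (M *v d)) + e\<^sup>2 * (p \<bullet> (M *v p)))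
      \<longlongrightarrow> d \<bullet> (M *v d) + 2 * 0 * (p \<bullet> (M *v d)) + 0\<^sup>2 * (p \<bullet> (M *v p))) (at_right 0)"
    by (intro tendsto_intros)
  then show ?thesis using ev by (intro tendsto_lowerbound) auto
qed

lemma s_lemma:
  fixes A P :: "real^'m^'m" and b x0 :: "real^'m" and c :: real
  assumes symA: "transpose A = A" and pdP: "pd P"
    and nn: "\<And>\<xi>. (\<xi> - x0) \<bullet> (P *v (\<xi> - x0)) \<le> 1 \<Longrightarrow> 0 \<le> \<xi> \<bullet> (A *v \<xi>) + b \<bullet> \<xi> + c"
  shows "\<exists>\<nu>\<ge>0. psd (A + \<nu> *\<^sub>R P) \<and>
     (\<forall>\<xi>. 0 \<le> \<xi> \<bullet> (A *v \<xi>) + b \<bullet> \<xi> + c + \<nu> * ((\<xi> - x0) \<bullet> (P *v (\<xi> - x0)) - 1))"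
proof -
  define g where "g \<xi> = \<xi> \<bullet> (A *v \<xi>) + b \<bullet> \<xi> + c" for \<xi>
  define hh where "hh \<xi> = (\<xi> - x0) \<bullet> (P *v (\<xi> - x0))" for \<xi>
  define E where "E = {\<xi>. hh \<xi> \<le> 1}"
  have symP: "transpose P = P" using pdP unfolding pd_def by auto
  obtain l where l: "l > 0" "\<And>y. l * (norm y)\<^sup>2 \<le> y \<bullet> (P *v y)"
    using pd_coercive[OF pdP] by auto
  have contg: "continuous_on S g" for S
    unfolding g_def by (intro continuous_intros continuous_on_id matrix_vector_mult_linear_continuous_on)
  have conth: "continuous_on S hh" for S
    unfolding hh_def
    by (intro continuous_intros continuous_on_id continuous_on_compose2[OF matrix_vector_mult_linear_continuous_on] ) auto
  have "closed E" unfolding E_def by (intro closed_Collect_le conth continuous_on_const)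
  moreover have "bounded E"
  proof (rule bounded_subset[OF bounded_cball[of x0 "sqrt (1/l)"]])
    show "E \<subseteq> cball x0 (sqrt (1 / l))"
    proof
      fix \<xi> assume "\<xi> \<in> E"
      then have "l * (norm (\<xi> - x0))\<^sup>2 \<le> 1" using l(2)[of "\<xi> - x0"] unfolding E_def hh_def by auto
      then have "(norm (\<xi> - x0))\<^sup>2 \<le> 1 / l" using l(1) by (simp add: field_simps)
      then have "norm (\<xi> - x0) \<le> sqrt (1/l)" by (rule real_le_rsqrt)
      then show "\<xi> \<in> cball x0 (sqrt (1 / l))" by (simp add: dist_norm norm_minus_commute)
    qed
  qed
  ultimately have cE: "compact E" by (simp add: compact_eq_bounded_closed)
  have "x0 \<in> E" unfolding E_def hh_def by simp
  then have neE: "E \<noteq> {}" by blast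
  obtain xs where xs: "xs \<in> E" "\<And>\<xi>. \<xi> \<in> E \<Longrightarrow> g xs \<le> g \<xi>"
    using continuous_attains_inf[OF cE neE contg] by blast
  have "hh xs \<le> 1" using xs(1) unfolding E_def by simp
  then have gxs: "0 \<le> g xs" using nn[of xs] unfolding hh_def g_def by simp
  define gr where "gr = 2 *\<^sub>R (A *v xs) + b"
  define p where "p = P *v (xs - x0)"
  have gexp: "g (xs + t *\<^sub>R d) = g xs + t * (gr \<bullet> d) + t\<^sup>2 * (d \<bullet> (A *v d))" for t d
  proof -
    have "gr \<bullet> d = 2 * ((A *v xs) \<bullet> d) + b \<bullet> d"
      unfolding gr_def by (simp add: inner_add_left)
    also have "(A *v xs) \<bullet> d = d \<bullet> (A *v xs)" by (rule inner_commute)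
    finally have "gr \<bullet> d = 2 * (d \<bullet> (A *v xs)) + b \<bullet> d" .
    then show ?thesis unfolding g_def quad_expand[OF symA] by (simp add: inner_add_right algebra_simps)
  qed
  have hexp: "hh (xs + t *\<^sub>R d) = hh xs + t * (2 * (p \<bullet> d)) + t\<^sup>2 * (d \<bullet> (P *v d))" for t d
  proof -
    have e: "xs + t *\<^sub>R d - x0 = (xs - x0) + t *\<^sub>R d" by simp
    have pd: "p \<bullet> d = d \<bullet> (P *v (xs - x0))" unfolding p_def by (rule inner_commute)
    show ?thesis unfolding hh_def e quad_expand[OF symP] pd by (simp add: algebra_simps)
  qed
  have key: "0 \<le> t * (gr \<bullet> d) + t\<^sup>2 * (d \<bullet> (A *v d))" if "hh (xs + t *\<^sub>R d) \<le> 1" for t d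
    using xs(2)[of "xs + t *\<^sub>R d"] that gexp[of t d] unfolding E_def by auto
  have dirl: "0 \<le> gr \<bullet> d" if "eventually (\<lambda>t. hh (xs + t *\<^sub>R d) \<le> 1) (at_right 0)" for d
  proof (rule dir_lemma[of "gr \<bullet> d" "d \<bullet> (A *v d)"])
    show "eventually (\<lambda>t. 0 \<le> gr \<bullet> d * t + d \<bullet> (A *v d) * t\<^sup>2) (at_right 0)"
      using that
    proof (rule eventually_mono)
      fix t :: real assume "hh (xs + t *\<^sub>R d) \<le> 1"
      from key[OF this] show "0 \<le> gr \<bullet> d * t + d \<bullet> (A *v d) * t\<^sup>2" by (simp add: mult.commute)
    qed
  qed
  have glob: "0 \<le> g \<xi> + \<nu> * (hh \<xi> - 1)"
    if "gr + (2 * \<nu>) *\<^sub>R p = 0" "\<nu> * (hh xs - 1) = 0" "\<forall>d. 0 \<le> d \<bullet> ((A + \<nu> *\<^sub>R P) *v d)" for \<xi> \<nu>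
  proof -
    define d where "d = \<xi> - xs"
    have xi: "\<xi> = xs + 1 *\<^sub>R d" by (simp add: d_def)
    have "g \<xi> + \<nu> * (hh \<xi> - 1) = g xs + \<nu> * (hh xs - 1) + (gr + (2 * \<nu>) *\<^sub>R p) \<bullet> d
        + d \<bullet> ((A + \<nu> *\<^sub>R P) *v d)"
    proof -
      have e1: "g \<xi> = g xs + gr \<bullet> d + d \<bullet> (A *v d)" using gexp[of 1 d] xi by simp
      have e2: "hh \<xi> = hh xs + 2 * (p \<bullet> d) + d \<bullet> (P *v d)" using hexp[of 1 d] xi by simp
      have e3: "(gr + (2 * \<nu>) *\<^sub>R p) \<bullet> d = gr \<bullet> d + 2 * \<nu> * (p \<bullet> d)"
        by (simp add: inner_add_left)
      show ?thesis unfolding Mexp e1 e2 e3 by (simp add: algebra_simps)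
    qed
    then show ?thesis using that gxs by simp
  qed
  have "hh xs \<le> 1" using xs(1) unfolding E_def by simp
  then consider "hh xs < 1" | "hh xs = 1" by linarith
  then show ?thesis
  proof cases
    case 1
    have ev: "eventually (\<lambda>t. hh (xs + t *\<^sub>R d) \<le> 1) (at_right 0)" for d
    proof -
      have "((\<lambda>t. hh xs + t * (2 * (p \<bullet> d)) + t\<^sup>2 * (d \<bullet> (P *v d)))
          \<longlongrightarrow> hh xs + 0 * (2 * (p \<bullet> d)) + 0\<^sup>2 * (d \<bullet> (P *v d))) (at_right 0)"
        by (intro tendsto_intros)
      then have "eventually (\<lambda>t. hh xs + t * (2 * (p \<bullet> d)) + t\<^sup>2 * (d \<bullet> (P *v d)) < 1) (at_right 0)"
        using 1 by (intro order_tendstoD(2)) auto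
      then show ?thesis by (rule eventually_mono) (simp add: hexp)
    qed
    have gr0: "gr = 0" using dirl[OF ev, of "- gr"] by (metis inner_ge_zero inner_eq_zero_iff order_antisym inner_minus_right neg_0_le_iff_le)
    have psdA: "0 \<le> d \<bullet> (A *v d)" for d
    proof -
      have "eventually (\<lambda>t. hh (xs + t *\<^sub>R d) \<le> 1 \<and> 0 < t) (at_right 0)"
        using ev[of d] eventually_at_right_less[of 0] by (rule eventually_conj)
      then obtain t where t: "hh (xs + t *\<^sub>R d) \<le> 1" "0 < t"
        using eventually_happens[of _ "at_right (0::real)"] by auto
      then have "0 \<le> t\<^sup>2 * (d \<bullet> (A *v d))" using key[OF t(1)] gr0 by simp
      then show ?thesis using t(2) by (simp add: zero_le_mult_iff)
    qed
    show ?thesis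
    proof (intro exI[of _ 0] conjI allI)
      show "psd (A + 0 *\<^sub>R P)" using symA psdA unfolding psd_def by simp
      fix \<xi> show "0 \<le> \<xi> \<bullet> (A *v \<xi>) + b \<bullet> \<xi> + c + 0 * ((\<xi> - x0) \<bullet> (P *v (\<xi> - x0)) - 1)"
        using glob[of 0 \<xi>] gr0 psdA by (simp add: g_def)
    qed simp
  next
    case 2
    have p0: "p \<noteq> 0" using 2 unfolding hh_def p_def by auto
    have pp: "0 < p \<bullet> p" using p0 by simp
    have F1: "0 \<le> gr \<bullet> d" if "p \<bullet> d < 0" for d
    proof (rule dirl)
      have "((\<lambda>t. 2 * (p \<bullet> d) + t * (d \<bullet> (P *v d))) \<longlongrightarrow> 2 * (p \<bullet> d) + 0 * (d \<bullet> (P *v d))) (at_right 0)"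
        by (intro tendsto_intros)
      from order_tendstoD(2)[OF this, of 0]
      have "eventually (\<lambda>t. 2 * (p \<bullet> d) + t * (d \<bullet> (P *v d)) < 0) (at_right 0)"
        using that by simp
      then show "eventually (\<lambda>t. hh (xs + t *\<^sub>R d) \<le> 1) (at_right 0)"
        using eventually_at_right_less[of 0]
      proof (rule eventually_elim2)
        fix t :: real assume a: "2 * (p \<bullet> d) + t * (d \<bullet> (P *v d)) < 0" "0 < t"
        have "hh (xs + t *\<^sub>R d) = 1 + t * (2 * (p \<bullet> d) + t * (d \<bullet> (P *v d)))"
          by (simp add: hexp 2 power2_eq_square algebra_simps)
        moreover have "t * (2 * (p \<bullet> d) + t * (d \<bullet> (P *v d))) < 0" using a by (simp add: mult_pos_neg)
        ultimately show "hh (xs + t *\<^sub>R d) \<le> 1" by simp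
      qed
    qed
    have F2: "0 \<le> gr \<bullet> d" if "p \<bullet> d = 0" for d
    proof -
      have ev: "eventually (\<lambda>e. 0 \<le> gr \<bullet> d - e * (gr \<bullet> p)) (at_right (0::real))"
        using eventually_at_right_less[of 0]
      proof (rule eventually_mono)
        fix e :: real assume "0 < e"
        then have "p \<bullet> (d - e *\<^sub>R p) < 0" using that pp by (simp add: inner_diff_right)
        from F1[OF this] show "0 \<le> gr \<bullet> d - e * (gr \<bullet> p)" by (simp add: inner_diff_right)
      qed
      have "((\<lambda>e. gr \<bullet> d - e * (gr \<bullet> p)) \<longlongrightarrow> gr \<bullet> d - 0 * (gr \<bullet> p)) (at_right 0)"
        by (intro tendsto_intros)
      then show ?thesis using ev by (intro tendsto_lowerbound) auto
    qed
    define \<mu> where "\<mu> = (gr \<bullet> p) / (p \<bullet> p)"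
    define w where "w = gr - \<mu> *\<^sub>R p"
    have wp: "p \<bullet> w = 0" unfolding w_def \<mu>_def using pp by (simp add: inner_diff_right inner_commute)
    have "0 \<le> gr \<bullet> w" "0 \<le> gr \<bullet> (- w)" using F2[of w] F2[of "- w"] wp by auto
    then have grw: "gr \<bullet> w = 0" by simp
    have "w \<bullet> w = (gr - \<mu> *\<^sub>R p) \<bullet> w" by (subst (1) w_def) (rule refl)
    also have "\<dots> = gr \<bullet> w - \<mu> * (p \<bullet> w)" by (simp add: inner_diff_left)
    finally have "w \<bullet> w = 0" using grw wp by simp
    then have grp: "gr = \<mu> *\<^sub>R p" unfolding w_def by simp
    have "0 \<le> gr \<bullet> (- p)" using F1[of "- p"] pp by simp
    then have "\<mu> \<le> 0" using grp pp by (simp add: mult_le_0_iff)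
    define \<nu> where "\<nu> = - \<mu> / 2"
    have nu0: "0 \<le> \<nu>" using \<open>\<mu> \<le> 0\<close> by (simp add: \<nu>_def)
    have grnu: "gr + (2 * \<nu>) *\<^sub>R p = 0" using grp by (simp add: \<nu>_def)
    have symM: "transpose (A + \<nu> *\<^sub>R P) = A + \<nu> *\<^sub>R P"
      using symA symP by (simp add: transpose_add transpose_scaleR')
    have psdM: "0 \<le> d \<bullet> ((A + \<nu> *\<^sub>R P) *v d)" for d
    proof (rule psd_from_nonorth[OF symM p0])
      fix d assume pd0: "p \<bullet> d \<noteq> 0"
      then have "d \<noteq> 0" by auto
      then have dPd: "0 < d \<bullet> (P *v d)" using pdP unfolding pd_def by auto
      define t where "t = - 2 * (p \<bullet> d) / (d \<bullet> (P *v d))"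
      have tt: "t * (d \<bullet> (P *v d)) = - 2 * (p \<bullet> d)" using dPd by (simp add: t_def)
      have t0: "t \<noteq> 0" using pd0 dPd by (simp add: t_def)
      have "hh (xs + t *\<^sub>R d) = 1 + t * (2 * (p \<bullet> d) + t * (d \<bullet> (P *v d)))"
        by (simp add: hexp 2 power2_eq_square algebra_simps)
      also have "\<dots> = 1" using tt by simp
      finally have "0 \<le> t * (gr \<bullet> d) + t\<^sup>2 * (d \<bullet> (A *v d))" by (intro key) simp
      also have "t * (gr \<bullet> d) = t\<^sup>2 * (\<nu> * (d \<bullet> (P *v d)))"
      proof -
        have "gr = - ((2 * \<nu>) *\<^sub>R p)" using grnu by (simp add: eq_neg_iff_add_eq_0)
        then have "gr \<bullet> d = - (2 * \<nu> * (p \<bullet> d))" by simp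
        then have "t * (gr \<bullet> d) = \<nu> * t * (- 2 * (p \<bullet> d))" by simp
        also have "\<dots> = \<nu> * t * (t * (d \<bullet> (P *v d)))" by (simp only: tt)
        finally show ?thesis by (simp add: power2_eq_square mult_ac)
      qed
      finally have "0 \<le> t\<^sup>2 * (\<nu> * (d \<bullet> (P *v d))) + t\<^sup>2 * (d \<bullet> (A *v d))" .
      then have "0 \<le> t\<^sup>2 * (d \<bullet> ((A + \<nu> *\<^sub>R P) *v d))" unfolding Mexp by (simp add: distrib_left)
      then show "0 \<le> d \<bullet> ((A + \<nu> *\<^sub>R P) *v d)" using t0 by (simp add: zero_le_mult_iff)
    qed
    show ?thesis
    proof (intro exI[of _ \<nu>] conjI allI nu0)
      show "psd (A + \<nu> *\<^sub>R P)" using symM psdM unfolding psd_def by simp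
      fix \<xi> show "0 \<le> \<xi> \<bullet> (A *v \<xi>) + b \<bullet> \<xi> + c + \<nu> * ((\<xi> - x0) \<bullet> (P *v (\<xi> - x0)) - 1)"
      proof -
        have "\<forall>d. 0 \<le> d \<bullet> ((A + \<nu> *\<^sub>R P) *v d)" using psdM by blast
        then have "0 \<le> g \<xi> + \<nu> * (hh \<xi> - 1)" using glob[of \<nu> \<xi>] grnu 2 by simp
        then show ?thesis by (simp add: g_def hh_def)
      qed
    qed
  qed
qed


lemma pd_inv:
  fixes W :: "real^'m^'m"
  assumes pdW: "pd W"
  shows "pd (matrix_inv W)"
proof -
  have symW: "transpose W = W" using pdW unfolding pd_def by auto
  have "inj ((*v) W)"
  proof (rule injI)
    fix x y :: "real^'m" assume "W *v x = W *v y"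
    then have "W *v (x - y) = 0" by (simp add: matrix_vector_mult_diff_distrib)
    then have "x - y = 0" using pdW unfolding pd_def by (metis inner_zero_right less_irrefl)
    then show "x = y" by simp
  qed
  then have "invertible W" unfolding invertible_left_inverse by (simp add: matrix_left_invertible_injective)
  then have "\<exists>A'. W ** A' = mat 1 \<and> A' ** W = mat 1" unfolding invertible_def .
  then have WI: "W ** matrix_inv W = mat 1" "matrix_inv W ** W = mat 1"
    unfolding matrix_inv_def by (metis (mono_tags, lifting) someI_ex)+
  define B where "B = transpose (matrix_inv W)"
  have "B ** W = transpose (W ** matrix_inv W)"
    unfolding B_def matrix_transpose_mul symW ..
  then have BW: "B ** W = mat 1" using WI by simp
  have "B = B ** (W ** matrix_inv W)" using WI by simp
  also have "\<dots> = matrix_inv W" by (simp add: matrix_mul_assoc BW)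
  finally have sym: "transpose (matrix_inv W) = matrix_inv W" unfolding B_def .
  show ?thesis unfolding pd_def
  proof (intro conjI sym allI impI)
    fix y :: "real^'m" assume y: "y \<noteq> 0"
    define z where "z = matrix_inv W *v y"
    have Wz: "W *v z = y" unfolding z_def matrix_vector_mul_assoc WI by simp
    then have "z \<noteq> 0" using y by auto
    then have "0 < z \<bullet> (W *v z)" using pdW unfolding pd_def by auto
    also have "z \<bullet> (W *v z) = y \<bullet> (matrix_inv W *v y)" using Wz z_def by (simp add: inner_commute)
    finally show "0 < y \<bullet> (matrix_inv W *v y)" .
  qed
qed

lemma sum_plus_unit:
  fixes f :: "'m::finite + unit \<Rightarrow> real"
  shows "sum f UNIV = (\<Sum>k\<in>UNIV. f (Inl k)) + f (Inr ())"
proof -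
  have "sum f UNIV = sum f (UNIV <+> UNIV)" by (simp add: UNIV_Plus_UNIV)
  also have "\<dots> = (\<Sum>k\<in>UNIV. f (Inl k)) + f (Inr ())" by (simp add: sum.Plus UNIV_unit)
  finally show ?thesis .
qed

lemma block_quad:
  fixes A :: "real^'m::finite^'m" and y :: "real^('m + unit)"
  assumes "\<And>k. yl $ k = y $ Inl k" and "s = y $ Inr ()"
  shows "y \<bullet> (block_mat A b c *v y) = yl \<bullet> (A *v yl) + 2 * s * (b \<bullet> yl) + c * s\<^sup>2"
  using assms
  by (simp add: inner_vec_def matrix_vector_mult_def block_mat_def sum_plus_unit sum_distrib_left
      sum_distrib_right sum.distrib algebra_simps power2_eq_square)

lemma block_psd:
  fixes A :: "real^'m::finite^'m"
  assumes symA: "transpose A = A" and psdA: "\<And>z. 0 \<le> z \<bullet> (A *v z)"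
    and L: "\<And>\<xi>. 0 \<le> \<xi> \<bullet> (A *v \<xi>) + 2 * (b \<bullet> \<xi>) + c"
  shows "psd (block_mat A b c)"
  unfolding psd_def
proof (intro conjI allI)
  have "A $ i $ j = A $ j $ i" for i j using symA by (metis transpose_def vec_lambda_beta)
  then show "transpose (block_mat A b c) = block_mat A b c"
    by (simp add: transpose_def block_mat_def vec_eq_iff split: sum.splits)
  fix y :: "real^('m + unit)"
  define yl :: "real^'m" where "yl = (\<chi> k. y $ Inl k)"
  define s where "s = y $ Inr ()"
  have Q: "y \<bullet> (block_mat A b c *v y) = yl \<bullet> (A *v yl) + 2 * s * (b \<bullet> yl) + c * s\<^sup>2"
    by (rule block_quad) (simp_all add: yl_def s_def)
  show "0 \<le> y \<bullet> (block_mat A b c *v y)"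
  proof (cases "s = 0")
    case True then show ?thesis using Q psdA[of yl] by simp
  next
    case False
    have "0 \<le> ((1/s) *\<^sub>R yl) \<bullet> (A *v ((1/s) *\<^sub>R yl)) + 2 * (b \<bullet> ((1/s) *\<^sub>R yl)) + c" by (rule L)
    also have "\<dots> = (yl \<bullet> (A *v yl) + 2 * s * (b \<bullet> yl) + c * s\<^sup>2) / s\<^sup>2"
      using False by (simp add: matrix_vector_mult_scaleR field_simps power2_eq_square)
    finally show ?thesis using Q False by (simp add: zero_le_divide_iff)
  qed
qed

lemma block_psd_elim:
  fixes A :: "real^'m::finite^'m"
  assumes "psd (block_mat A b c)"
  shows "0 \<le> \<xi> \<bullet> (A *v \<xi>) + 2 * (b \<bullet> \<xi>) + c"
proof -
  define y :: "real^('m + unit)" where "y = (\<chi> i. case i of Inl k \<Rightarrow> \<xi> $ k | Inr _ \<Rightarrow> 1)"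
  have "y \<bullet> (block_mat A b c *v y) = \<xi> \<bullet> (A *v \<xi>) + 2 * 1 * (b \<bullet> \<xi>) + c * 1\<^sup>2"
    by (rule block_quad) (simp_all add: y_def)
  moreover have "0 \<le> y \<bullet> (block_mat A b c *v y)" using assms unfolding psd_def by blast
  ultimately show ?thesis by simp
qed

lemma form_id:
  fixes P A :: "real^'m^'m"
  assumes symP: "transpose P = P"
  shows "\<xi> \<bullet> ((A + \<nu> *\<^sub>R P) *v \<xi>)
      + 2 * ((- (1/2)) *\<^sub>R ((2 * \<nu>) *\<^sub>R (P *v x0) + v - R) \<bullet> \<xi>)
      + (u + \<nu> * (x0 \<bullet> (P *v x0)) - \<nu>)
    = \<xi> \<bullet> (A *v \<xi>) + (R - v) \<bullet> \<xi> + u + \<nu> * ((\<xi> - x0) \<bullet> (P *v (\<xi> - x0)) - 1)"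
proof -
  have h: "(\<xi> - x0) \<bullet> (P *v (\<xi> - x0)) = \<xi> \<bullet> (P *v \<xi>) - 2 * ((P *v x0) \<bullet> \<xi>) + x0 \<bullet> (P *v x0)"
    using sym_dot[OF symP, of x0 \<xi>]
    by (simp add: matrix_vector_mult_diff_distrib inner_diff_left inner_diff_right inner_commute)
  show ?thesis unfolding h Mexp
    by (simp add: inner_add_left inner_diff_left algebra_simps)
qed

lemma sum_mv: "finite S \<Longrightarrow> (sum f S) *v (x::real^'m) = (\<Sum>j\<in>S. f j *v x)"
  by (induction S rule: finite_induct) (simp_all add: matrix_vector_mult_add_rdistrib)

lemma sum_transpose: "finite S \<Longrightarrow> transpose (sum f S) = (\<Sum>j\<in>S. transpose (f j :: real^'m^'m))"
proof (induction S rule: finite_induct)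
  case empty show ?case by (simp add: transpose_def vec_eq_iff)
next
  case (insert x F) then show ?case by (simp add: transpose_add)
qed

lemma fobj_expand:
  "fobj Wc r h t x \<xi> = \<xi> \<bullet> (Wt Wc t x *v \<xi>) + Rt r t x \<bullet> \<xi> + Ht h t x"
  unfolding fobj_def Wt_def Rt_def Ht_def wcomp_def
  by (simp add: sum_mv inner_sum_right inner_sum_left sum.distrib algebra_simps
      flip: scaleR_matrix_vector_assoc)

lemma Wt_sym:
  assumes "\<forall>j. psd (Wc t j)"
  shows "transpose (Wt Wc t x) = Wt Wc t x"
  using assms unfolding Wt_def psd_def by (simp add: sum_transpose transpose_scaleR')


lemma ellipsoid_compact:
  fixes P :: "real^'m^'m"
  assumes "pd P"
  shows "compact {\<xi>. (\<xi> - x0) \<bullet> (P *v (\<xi> - x0)) \<le> 1}"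
proof -
  define E where "E = {\<xi>. (\<xi> - x0) \<bullet> (P *v (\<xi> - x0)) \<le> 1}"
  obtain l where l: "l > 0" "\<And>y. l * (norm y)\<^sup>2 \<le> y \<bullet> (P *v y)"
    using pd_coercive[OF assms] by auto
  have conth: "continuous_on UNIV (\<lambda>\<xi>. (\<xi> - x0) \<bullet> (P *v (\<xi> - x0)))"
    by (intro continuous_intros continuous_on_id continuous_on_compose2[OF matrix_vector_mult_linear_continuous_on] ) auto
  have "closed E" unfolding E_def by (intro closed_Collect_le conth continuous_on_const)
  moreover have "bounded E"
  proof (rule bounded_subset[OF bounded_cball[of x0 "sqrt (1/l)"]])
    show "E \<subseteq> cball x0 (sqrt (1 / l))"
    proof
      fix \<xi> assume "\<xi> \<in> E"
      then have "l * (norm (\<xi> - x0))\<^sup>2 \<le> 1" using l(2)[of "\<xi> - x0"] unfolding E_def by auto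
      then have "(norm (\<xi> - x0))\<^sup>2 \<le> 1 / l" using l(1) by (simp add: field_simps)
      then have "norm (\<xi> - x0) \<le> sqrt (1/l)" by (rule real_le_rsqrt)
      then show "\<xi> \<in> cball x0 (sqrt (1 / l))" by (simp add: dist_norm norm_minus_commute)
    qed
  qed
  ultimately show ?thesis unfolding E_def[symmetric] by (simp add: compact_eq_bounded_closed)
qed

lemma obj_cont: "continuous_on S (\<lambda>\<xi>. v \<bullet> \<xi> - fobj Wc r h t x \<xi>)"
  unfolding fobj_expand
  by (intro continuous_intros continuous_on_id matrix_vector_mult_linear_continuous_on)

theorem proposition4:
  fixes \<epsilon> \<delta> :: real and N T :: nat
    and nrm :: "real^'m::finite \<Rightarrow> real"
    and \<zeta> :: "nat \<Rightarrow> real^'m"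
    and \<xi>0 :: "real^'m" and W :: "real^'m^'m"
    and Wc :: "nat \<Rightarrow> 'n::finite \<Rightarrow> real^'m^'m"
    and r :: "nat \<Rightarrow> 'n \<Rightarrow> real^'m" and h :: "nat \<Rightarrow> 'n \<Rightarrow> real"
  assumes "0 < \<epsilon>" "\<epsilon> < 1" "0 < \<delta>"
    and "is_norm nrm"
    and "pd W"
    and "\<forall>i\<in>{1..N}. \<zeta> i \<in> ellipsoid \<xi>0 W"
    and "\<forall>t\<in>{1..T}. \<forall>j. psd (Wc t j)"
  shows
   "{x :: real^'n. \<exists>(\<alpha>::nat \<Rightarrow> real) (q::nat \<Rightarrow> nat \<Rightarrow> real) (v::nat \<Rightarrow> nat \<Rightarrow> real^'m).
       \<forall>i\<in>{1..N}. \<forall>t\<in>{1..T}.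
         0 < \<alpha> t \<and> 0 \<le> q i t
       \<and> dual_norm nrm (v i t) * \<delta> + (1 / real N) * (\<Sum>j=1..N. q j t) \<le> \<epsilon> * \<alpha> t
       \<and> (SUP \<xi>\<in>ellipsoid \<xi>0 W. v i t \<bullet> \<xi> - fobj Wc r h t x \<xi>) + \<alpha> t - v i t \<bullet> \<zeta> i - q i t \<le> 0}
  = {x :: real^'n. \<exists>(\<alpha>::nat \<Rightarrow> real) (q::nat \<Rightarrow> nat \<Rightarrow> real) (v::nat \<Rightarrow> nat \<Rightarrow> real^'m)
                     (u::nat \<Rightarrow> nat \<Rightarrow> real) (\<nu>::nat \<Rightarrow> nat \<Rightarrow> real).
       \<forall>i\<in>{1..N}. \<forall>t\<in>{1..T}.
         0 < \<alpha> t \<and> 0 \<le> q i t \<and> 0 \<le> \<nu> i t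
       \<and> dual_norm nrm (v i t) * \<delta> + (1 / real N) * (\<Sum>j=1..N. q j t) \<le> \<epsilon> * \<alpha> t
       \<and> u i t - Ht h t x + \<alpha> t - v i t \<bullet> \<zeta> i \<le> q i t
       \<and> psd (block_mat
               (Wt Wc t x + \<nu> i t *\<^sub>R matrix_inv W)
               (- (1/2) *\<^sub>R ((2 * \<nu> i t) *\<^sub>R (matrix_inv W *v \<xi>0) + v i t - Rt r t x))
               (u i t + \<nu> i t * (\<xi>0 \<bullet> (matrix_inv W *v \<xi>0)) - \<nu> i t))}"
  (is "?L = ?R")
proof (intro equalityI subsetI)
  define P where "P = matrix_inv W"
  have pdP: "pd P" unfolding P_def by (rule pd_inv[OF assms(5)])
  have symP: "transpose P = P" using pdP unfolding pd_def by auto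
  define E where "E = ellipsoid \<xi>0 W"
  have E_eq: "E = {\<xi>. (\<xi> - \<xi>0) \<bullet> (P *v (\<xi> - \<xi>0)) \<le> 1}"
    unfolding E_def P_def ellipsoid_def ..
  have x0E: "\<xi>0 \<in> E" unfolding E_eq by simp
  then have neE: "E \<noteq> {}" by blast
  have cE: "compact E" unfolding E_eq by (rule ellipsoid_compact[OF pdP])
  have bdd: "bdd_above ((\<lambda>\<xi>. vv \<bullet> \<xi> - fobj Wc r h t x \<xi>) ` E)" for vv t x
    by (intro bounded_imp_bdd_above compact_imp_bounded compact_continuous_image[OF obj_cont cE])
  {
    fix x assume "x \<in> ?L"
    then obtain \<alpha> q v where H: "\<forall>i\<in>{1..N}. \<forall>t\<in>{1..T}.
         0 < \<alpha> t \<and> 0 \<le> q i t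
       \<and> dual_norm nrm (v i t) * \<delta> + (1 / real N) * (\<Sum>j=1..N. q j t) \<le> \<epsilon> * \<alpha> t
       \<and> (SUP \<xi>\<in>E. v i t \<bullet> \<xi> - fobj Wc r h t x \<xi>) + \<alpha> t - v i t \<bullet> \<zeta> i - q i t \<le> 0"
      unfolding E_def by blast
    define S where "S i t = (SUP \<xi>\<in>E. v i t \<bullet> \<xi> - fobj Wc r h t x \<xi>)" for i t
    define u where "u i t = S i t + Ht h t x" for i t
    define Q where "Q i t \<nu> \<longleftrightarrow> 0 \<le> \<nu> \<and> psd (block_mat
               (Wt Wc t x + \<nu> *\<^sub>R P)
               (- (1/2) *\<^sub>R ((2 * \<nu>) *\<^sub>R (P *v \<xi>0) + v i t - Rt r t x))
               (u i t + \<nu> * (\<xi>0 \<bullet> (P *v \<xi>0)) - \<nu>))" for i t \<nu>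
    have exQ: "\<exists>\<nu>. Q i t \<nu>" if t: "t \<in> {1..T}" for i t
    proof -
      have symA: "transpose (Wt Wc t x) = Wt Wc t x" using assms(7) t by (intro Wt_sym) auto
      have nn: "0 \<le> \<xi> \<bullet> (Wt Wc t x *v \<xi>) + (Rt r t x - v i t) \<bullet> \<xi> + u i t"
        if "(\<xi> - \<xi>0) \<bullet> (P *v (\<xi> - \<xi>0)) \<le> 1" for \<xi>
      proof -
        have "\<xi> \<in> E" unfolding E_eq using that by simp
        then have "v i t \<bullet> \<xi> - fobj Wc r h t x \<xi> \<le> S i t"
          unfolding S_def by (intro cSUP_upper bdd)
        then show ?thesis unfolding u_def fobj_expand by (simp add: inner_diff_left)
      qed
      obtain \<nu> where \<nu>: "0 \<le> \<nu>" "psd (Wt Wc t x + \<nu> *\<^sub>R P)"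
        "\<forall>\<xi>. 0 \<le> \<xi> \<bullet> (Wt Wc t x *v \<xi>) + (Rt r t x - v i t) \<bullet> \<xi> + u i t
            + \<nu> * ((\<xi> - \<xi>0) \<bullet> (P *v (\<xi> - \<xi>0)) - 1)"
        using s_lemma[OF symA pdP nn] by blast
      have "psd (block_mat
               (Wt Wc t x + \<nu> *\<^sub>R P)
               (- (1/2) *\<^sub>R ((2 * \<nu>) *\<^sub>R (P *v \<xi>0) + v i t - Rt r t x))
               (u i t + \<nu> * (\<xi>0 \<bullet> (P *v \<xi>0)) - \<nu>))"
      proof (rule block_psd)
        show "transpose (Wt Wc t x + \<nu> *\<^sub>R P) = Wt Wc t x + \<nu> *\<^sub>R P"
          using \<nu>(2) unfolding psd_def by blast
        show "0 \<le> z \<bullet> ((Wt Wc t x + \<nu> *\<^sub>R P) *v z)" for z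
          using \<nu>(2) unfolding psd_def by blast
        show "0 \<le> \<xi> \<bullet> ((Wt Wc t x + \<nu> *\<^sub>R P) *v \<xi>)
          + 2 * ((- (1/2)) *\<^sub>R ((2 * \<nu>) *\<^sub>R (P *v \<xi>0) + v i t - Rt r t x) \<bullet> \<xi>)
          + (u i t + \<nu> * (\<xi>0 \<bullet> (P *v \<xi>0)) - \<nu>)" for \<xi>
          unfolding form_id[OF symP] using \<nu>(3) by blast
      qed
      then show ?thesis using \<nu>(1) unfolding Q_def by blast
    qed
    define \<nu> where "\<nu> i t = (SOME \<nu>. Q i t \<nu>)" for i t
    have Q\<nu>: "Q i t (\<nu> i t)" if "t \<in> {1..T}" for i t
      unfolding \<nu>_def using exQ[OF that] by (rule someI_ex)
    have "\<forall>i\<in>{1..N}. \<forall>t\<in>{1..T}.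
         0 < \<alpha> t \<and> 0 \<le> q i t \<and> 0 \<le> \<nu> i t
       \<and> dual_norm nrm (v i t) * \<delta> + (1 / real N) * (\<Sum>j=1..N. q j t) \<le> \<epsilon> * \<alpha> t
       \<and> u i t - Ht h t x + \<alpha> t - v i t \<bullet> \<zeta> i \<le> q i t
       \<and> psd (block_mat
               (Wt Wc t x + \<nu> i t *\<^sub>R matrix_inv W)
               (- (1/2) *\<^sub>R ((2 * \<nu> i t) *\<^sub>R (matrix_inv W *v \<xi>0) + v i t - Rt r t x))
               (u i t + \<nu> i t * (\<xi>0 \<bullet> (matrix_inv W *v \<xi>0)) - \<nu> i t))"
    proof (intro ballI)
      fix i t assume i: "i \<in> {1..N}" and t: "t \<in> {1..T}"
      have Hit: "0 < \<alpha> t" "0 \<le> q i t"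
        "dual_norm nrm (v i t) * \<delta> + (1 / real N) * (\<Sum>j=1..N. q j t) \<le> \<epsilon> * \<alpha> t"
        "S i t + \<alpha> t - v i t \<bullet> \<zeta> i - q i t \<le> 0"
        using H i t unfolding S_def by auto
      show "0 < \<alpha> t \<and> 0 \<le> q i t \<and> 0 \<le> \<nu> i t
       \<and> dual_norm nrm (v i t) * \<delta> + (1 / real N) * (\<Sum>j=1..N. q j t) \<le> \<epsilon> * \<alpha> t
       \<and> u i t - Ht h t x + \<alpha> t - v i t \<bullet> \<zeta> i \<le> q i t
       \<and> psd (block_mat
               (Wt Wc t x + \<nu> i t *\<^sub>R matrix_inv W)
               (- (1/2) *\<^sub>R ((2 * \<nu> i t) *\<^sub>R (matrix_inv W *v \<xi>0) + v i t - Rt r t x))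
               (u i t + \<nu> i t * (\<xi>0 \<bullet> (matrix_inv W *v \<xi>0)) - \<nu> i t))"
        using Hit Q\<nu>[OF t, of i] unfolding Q_def P_def u_def by simp
    qed
    then show "x \<in> ?R" by blast
  }
  {
    fix x assume "x \<in> ?R"
    then obtain \<alpha> q v u \<nu> where H: "\<forall>i\<in>{1..N}. \<forall>t\<in>{1..T}.
         0 < \<alpha> t \<and> 0 \<le> q i t \<and> 0 \<le> \<nu> i t
       \<and> dual_norm nrm (v i t) * \<delta> + (1 / real N) * (\<Sum>j=1..N. q j t) \<le> \<epsilon> * \<alpha> t
       \<and> u i t - Ht h t x + \<alpha> t - v i t \<bullet> \<zeta> i \<le> q i t
       \<and> psd (block_mat
               (Wt Wc t x + \<nu> i t *\<^sub>R P)
               (- (1/2) *\<^sub>R ((2 * \<nu> i t) *\<^sub>R (P *v \<xi>0) + v i t - Rt r t x))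
               (u i t + \<nu> i t * (\<xi>0 \<bullet> (P *v \<xi>0)) - \<nu> i t))"
      unfolding P_def by blast
    have "\<forall>i\<in>{1..N}. \<forall>t\<in>{1..T}.
         0 < \<alpha> t \<and> 0 \<le> q i t
       \<and> dual_norm nrm (v i t) * \<delta> + (1 / real N) * (\<Sum>j=1..N. q j t) \<le> \<epsilon> * \<alpha> t
       \<and> (SUP \<xi>\<in>ellipsoid \<xi>0 W. v i t \<bullet> \<xi> - fobj Wc r h t x \<xi>) + \<alpha> t - v i t \<bullet> \<zeta> i - q i t \<le> 0"
    proof (intro ballI)
      fix i t assume i: "i \<in> {1..N}" and t: "t \<in> {1..T}"
      have Hit: "0 < \<alpha> t" "0 \<le> q i t" "0 \<le> \<nu> i t"
        "dual_norm nrm (v i t) * \<delta> + (1 / real N) * (\<Sum>j=1..N. q j t) \<le> \<epsilon> * \<alpha> t"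
        "u i t - Ht h t x + \<alpha> t - v i t \<bullet> \<zeta> i \<le> q i t"
        "psd (block_mat
               (Wt Wc t x + \<nu> i t *\<^sub>R P)
               (- (1/2) *\<^sub>R ((2 * \<nu> i t) *\<^sub>R (P *v \<xi>0) + v i t - Rt r t x))
               (u i t + \<nu> i t * (\<xi>0 \<bullet> (P *v \<xi>0)) - \<nu> i t))"
        using H i t by auto
      have le: "v i t \<bullet> \<xi> - fobj Wc r h t x \<xi> \<le> u i t - Ht h t x" if "\<xi> \<in> E" for \<xi>
      proof -
        have hh: "(\<xi> - \<xi>0) \<bullet> (P *v (\<xi> - \<xi>0)) \<le> 1" using that unfolding E_eq by simp
        have "0 \<le> \<xi> \<bullet> ((Wt Wc t x + \<nu> i t *\<^sub>R P) *v \<xi>)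
          + 2 * ((- (1/2)) *\<^sub>R ((2 * \<nu> i t) *\<^sub>R (P *v \<xi>0) + v i t - Rt r t x) \<bullet> \<xi>)
          + (u i t + \<nu> i t * (\<xi>0 \<bullet> (P *v \<xi>0)) - \<nu> i t)"
          by (rule block_psd_elim[OF Hit(6)])
        then have g: "0 \<le> \<xi> \<bullet> (Wt Wc t x *v \<xi>) + (Rt r t x - v i t) \<bullet> \<xi> + u i t
            + \<nu> i t * ((\<xi> - \<xi>0) \<bullet> (P *v (\<xi> - \<xi>0)) - 1)"
          unfolding form_id[OF symP] .
        have "\<nu> i t * ((\<xi> - \<xi>0) \<bullet> (P *v (\<xi> - \<xi>0)) - 1) \<le> 0"
          using Hit(3) hh by (simp add: mult_nonneg_nonpos)
        then have "0 \<le> \<xi> \<bullet> (Wt Wc t x *v \<xi>) + (Rt r t x - v i t) \<bullet> \<xi> + u i t" using g by linarith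
        then show ?thesis unfolding fobj_expand by (simp add: inner_diff_left)
      qed
      have "(SUP \<xi>\<in>E. v i t \<bullet> \<xi> - fobj Wc r h t x \<xi>) \<le> u i t - Ht h t x"
        by (rule cSUP_least[OF neE le])
      then show "0 < \<alpha> t \<and> 0 \<le> q i t
       \<and> dual_norm nrm (v i t) * \<delta> + (1 / real N) * (\<Sum>j=1..N. q j t) \<le> \<epsilon> * \<alpha> t
       \<and> (SUP \<xi>\<in>ellipsoid \<xi>0 W. v i t \<bullet> \<xi> - fobj Wc r h t x \<xi>) + \<alpha> t - v i t \<bullet> \<zeta> i - q i t \<le> 0"
        using Hit unfolding E_def by linarith
    qed
    then show "x \<in> ?L" by blast
  }
qed

end
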